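(* For every set $\Gamma$ of formulas and every formula $\alpha$ of the language of $\mathbb{F}$ containing no nested modal operators, $\Gamma\models^{\mathbb{F}}\alpha$ if and only if $\Gamma^*\models\alpha^*$, where $\Gamma^*=\{\gamma^*:\gamma\in\Gamma\}$.
   Context: Propositional formulas are built from a countable set of variables with $\bot,\land,\lor,\to,\leftrightarrow,\neg$. The language of $\mathbb{F}$ adds unary $\Box,\lozenge$ and dyadic $\bigcirc(\psi/\varphi)$; a formula has no nested modal operators (is flat) if $\Box,\lozenge,\bigcirc$ are applied only to propositional formulas. A preference model is $\langle S,\succeq,V\rangle$ with $S$ a set, $\succeq\subseteq S\times S$ arbitrary, $V$ a valuation; for a set $X\subseteq S$, $\mathit{most}(X)=\{s\in X:\forall v\in X\,(v\succeq s\Rightarrow s\succeq v)\}$; it satisfies limitedness if for every formula $\varphi$, $\|\varphi\|\neq\emptyset\Rightarrow\mathit{most}(\|\varphi\|)\neq\emptyset$, where $\|\varphi\|$ is the truth set. Truth: Boolean clauses as usual; $\Box\varphi$ holds at $s$ iff $\varphi$ holds at every state; $\lozenge\varphi$ iff $\varphi$ holds at some state; $\bigcirc(\psi/\varphi)$ holds at $s$ iff $\mathit{most}(\|\varphi\|)\subseteq\|\psi\|$. $\Gamma\models^{\mathbb{F}}\alpha$ means: in every preference model satisfying limitedness, at every state where all of $\Gamma$ hold, $\alpha$ holds. The language $\mathcal{L}_T$ is $\alpha::=\varphi\mid\varphi\rightsquigarrow\varphi\mid B(\alpha)\mid\alpha*\alpha\mid\neg\alpha$ ($\varphi$ propositional,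 $*$ binary connective). A Trust model is $\mathcal{M}=\langle S,(S_i)_{i\in I},(\succeq_i)_{i\in I},R,V\rangle$ where $R\subseteq S\times S$ is serial and transitive, $(S_i)_{i\in I}$ is a partition of $S$, each $\succeq_i\subseteq S_i\times S_i$ is arbitrary, $V$ assigns to each variable a subset of $S$, and for each $i$ and each propositional $\varphi$: $\|\varphi\|_i\neq\emptyset\Rightarrow\mathit{most}(\|\varphi\|_i)\neq\emptyset$, where $\|\varphi\|_i=\{v\in S_i:\mathcal{M},v\models\varphi\}$ and $\mathit{most}(\|\varphi\|_i)=\{s\in\|\varphi\|_i:\forall v\in\|\varphi\|_i\,(v\succeq_i s\Rightarrow s\succeq_i v)\}$. Truth: $s\models p$ iff $s\in V(p)$; Boolean clauses as usual; $s\models\varphi\rightsquigarrow\psi$ iff $\mathit{most}(\|\varphi\|_i)\subseteq\|\psi\|_i$ for the $i$ with $s\in S_i$; $s\models B(\alpha)$ iff $v\models\alpha$ for all $v$ with $sRv$. $\Gamma\models\alpha$ means: in every Trust model, at every state where all of $\Gamma$ hold, $\alpha$ holds. Translation $^*$: $\varphi^*=\varphi$ for propositional $\varphi$, $(\Box\varphi)^*=\neg\varphi\rightsquigarrow\bot$, $(\lozenge\varphi)^*=\neg(\varphi\rightsquigarrow\bot)$, $(\bigcirc(\psi/\varphi))^*=\varphi\rightsquigarrow\psi$, commuting with Boolean connectives. *)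

theory Defs
  imports Main
begin

datatype pform = PVar nat | PBot | PAnd pform pform | POr pform pform
  | PImp pform pform | PIff pform pform | PNeg pform

primrec psat :: "(nat \<Rightarrow> 's set) \<Rightarrow> 's \<Rightarrow> pform \<Rightarrow> bool" where
  "psat V s (PVar p) = (s \<in> V p)"
| "psat V s PBot = False"
| "psat V s (PAnd a b) = (psat V s a \<and> psat V s b)"
| "psat V s (POr a b) = (psat V s a \<or> psat V s b)"
| "psat V s (PImp a b) = (psat V s a \<longrightarrow> psat V s b)"
| "psat V s (PIff a b) = (psat V s a \<longleftrightarrow> psat V s b)"
| "psat V s (PNeg a) = (\<not> psat V s a)"

definition most :: "'s rel \<Rightarrow> 's set \<Rightarrow> 's set" where
  "most P X = {s \<in> X. \<forall>v\<in>X. (v, s) \<in> P \<longrightarrow> (s, v) \<in> P}"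

text \<open>FOb psi phi stands for the dyadic obligation O(psi/phi).\<close>
datatype fform = FVar nat | FBot | FAnd fform fform | FOr fform fform
  | FImp fform fform | FIff fform fform | FNeg fform
  | FBox fform | FDia fform | FOb fform fform

primrec modal_free :: "fform \<Rightarrow> bool" where
  "modal_free (FVar p) = True"
| "modal_free FBot = True"
| "modal_free (FAnd a b) = (modal_free a \<and> modal_free b)"
| "modal_free (FOr a b) = (modal_free a \<and> modal_free b)"
| "modal_free (FImp a b) = (modal_free a \<and> modal_free b)"
| "modal_free (FIff a b) = (modal_free a \<and> modal_free b)"
| "modal_free (FNeg a) = modal_free a"
| "modal_free (FBox a) = False"
| "modal_free (FDia a) = False"
| "modal_free (FOb a b) = False"

text \<open>No nested modal operators: modalities are applied only to propositional formulas.\<close>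
primrec flat :: "fform \<Rightarrow> bool" where
  "flat (FVar p) = True"
| "flat FBot = True"
| "flat (FAnd a b) = (flat a \<and> flat b)"
| "flat (FOr a b) = (flat a \<and> flat b)"
| "flat (FImp a b) = (flat a \<and> flat b)"
| "flat (FIff a b) = (flat a \<and> flat b)"
| "flat (FNeg a) = flat a"
| "flat (FBox a) = modal_free a"
| "flat (FDia a) = modal_free a"
| "flat (FOb a b) = (modal_free a \<and> modal_free b)"

text \<open>Reading a modal-free F-formula as a propositional formula
  (modal cases are irrelevant and mapped arbitrarily).\<close>
primrec to_prop :: "fform \<Rightarrow> pform" where
  "to_prop (FVar p) = PVar p"
| "to_prop FBot = PBot"
| "to_prop (FAnd a b) = PAnd (to_prop a) (to_prop b)"
| "to_prop (FOr a b) = POr (to_prop a) (to_prop b)"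
| "to_prop (FImp a b) = PImp (to_prop a) (to_prop b)"
| "to_prop (FIff a b) = PIff (to_prop a) (to_prop b)"
| "to_prop (FNeg a) = PNeg (to_prop a)"
| "to_prop (FBox a) = PBot"
| "to_prop (FDia a) = PBot"
| "to_prop (FOb a b) = PBot"

primrec fsat :: "'s set \<Rightarrow> 's rel \<Rightarrow> (nat \<Rightarrow> 's set) \<Rightarrow> 's \<Rightarrow> fform \<Rightarrow> bool" where
  "fsat S P V s (FVar p) = (s \<in> V p)"
| "fsat S P V s FBot = False"
| "fsat S P V s (FAnd a b) = (fsat S P V s a \<and> fsat S P V s b)"
| "fsat S P V s (FOr a b) = (fsat S P V s a \<or> fsat S P V s b)"
| "fsat S P V s (FImp a b) = (fsat S P V s a \<longrightarrow> fsat S P V s b)"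
| "fsat S P V s (FIff a b) = (fsat S P V s a \<longleftrightarrow> fsat S P V s b)"
| "fsat S P V s (FNeg a) = (\<not> fsat S P V s a)"
| "fsat S P V s (FBox a) = (\<forall>t\<in>S. fsat S P V t a)"
| "fsat S P V s (FDia a) = (\<exists>t\<in>S. fsat S P V t a)"
| "fsat S P V s (FOb psi phi) =
     (most P {t \<in> S. fsat S P V t phi} \<subseteq> {t \<in> S. fsat S P V t psi})"

definition pref_model :: "'s set \<Rightarrow> 's rel \<Rightarrow> (nat \<Rightarrow> 's set) \<Rightarrow> bool" where
  "pref_model S P V \<longleftrightarrow> P \<subseteq> S \<times> S \<and> (\<forall>p. V p \<subseteq> S)"

definition limitedness :: "'s set \<Rightarrow> 's rel \<Rightarrow> (nat \<Rightarrow> 's set) \<Rightarrow> bool" where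
  "limitedness S P V \<longleftrightarrow>
     (\<forall>phi. {t \<in> S. fsat S P V t phi} \<noteq> {} \<longrightarrow> most P {t \<in> S. fsat S P V t phi} \<noteq> {})"

definition fcons :: "'s itself \<Rightarrow> fform set \<Rightarrow> fform \<Rightarrow> bool" where
  "fcons _ \<Gamma> \<alpha> \<longleftrightarrow>
     (\<forall>(S :: 's set) P V. pref_model S P V \<and> limitedness S P V \<longrightarrow>
        (\<forall>s\<in>S. (\<forall>\<gamma>\<in>\<Gamma>. fsat S P V s \<gamma>) \<longrightarrow> fsat S P V s \<alpha>))"

datatype tform = TProp pform | TCond pform pform | TB tform
  | TAnd tform tform | TOr tform tform | TImp tform tform | TIff tform tform
  | TNeg tform

definition trust_model ::
  "'s set \<Rightarrow> 'i set \<Rightarrow> ('i \<Rightarrow> 's set) \<Rightarrow> ('i \<Rightarrow> 's rel) \<Rightarrow> 's rel \<Rightarrow> (nat \<Rightarrow> 's set) \<Rightarrow> bool"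
where
  "trust_model S I C Pr R V \<longleftrightarrow>
     R \<subseteq> S \<times> S \<and> (\<forall>s\<in>S. \<exists>v. (s, v) \<in> R) \<and> trans R
   \<and> (\<forall>i\<in>I. C i \<noteq> {}) \<and> (\<forall>i\<in>I. \<forall>j\<in>I. i \<noteq> j \<longrightarrow> C i \<inter> C j = {})
   \<and> (\<Union>i\<in>I. C i) = S
   \<and> (\<forall>i\<in>I. Pr i \<subseteq> C i \<times> C i)
   \<and> (\<forall>p. V p \<subseteq> S)
   \<and> (\<forall>i\<in>I. \<forall>phi. {v \<in> C i. psat V v phi} \<noteq> {} \<longrightarrow>
                     most (Pr i) {v \<in> C i. psat V v phi} \<noteq> {})"

primrec tsat ::
  "'i set \<Rightarrow> ('i \<Rightarrow> 's set) \<Rightarrow> ('i \<Rightarrow> 's rel) \<Rightarrow> 's rel \<Rightarrow> (nat \<Rightarrow> 's set) \<Rightarrow> 's \<Rightarrow> tform \<Rightarrow> bool"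
where
  "tsat I C Pr R V s (TProp a) = psat V s a"
| "tsat I C Pr R V s (TCond a b) =
     (\<exists>i\<in>I. s \<in> C i \<and> most (Pr i) {v \<in> C i. psat V v a} \<subseteq> {v \<in> C i. psat V v b})"
| "tsat I C Pr R V s (TB a) = (\<forall>v. (s, v) \<in> R \<longrightarrow> tsat I C Pr R V v a)"
| "tsat I C Pr R V s (TAnd a b) = (tsat I C Pr R V s a \<and> tsat I C Pr R V s b)"
| "tsat I C Pr R V s (TOr a b) = (tsat I C Pr R V s a \<or> tsat I C Pr R V s b)"
| "tsat I C Pr R V s (TImp a b) = (tsat I C Pr R V s a \<longrightarrow> tsat I C Pr R V s b)"
| "tsat I C Pr R V s (TIff a b) = (tsat I C Pr R V s a \<longleftrightarrow> tsat I C Pr R V s b)"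
| "tsat I C Pr R V s (TNeg a) = (\<not> tsat I C Pr R V s a)"

definition tcons :: "'s itself \<Rightarrow> 'i itself \<Rightarrow> tform set \<Rightarrow> tform \<Rightarrow> bool" where
  "tcons _ _ \<Gamma> \<alpha> \<longleftrightarrow>
     (\<forall>(S :: 's set) (I :: 'i set) C Pr R V. trust_model S I C Pr R V \<longrightarrow>
        (\<forall>s\<in>S. (\<forall>\<gamma>\<in>\<Gamma>. tsat I C Pr R V s \<gamma>) \<longrightarrow> tsat I C Pr R V s \<alpha>))"

fun trans_star :: "fform \<Rightarrow> tform" where
  "trans_star f =
    (if modal_free f then TProp (to_prop f) else
     (case f of
        FBox a \<Rightarrow> TCond (PNeg (to_prop a)) PBot
      | FDia a \<Rightarrow> TNeg (TCond (to_prop a) PBot)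
      | FOb psi phi \<Rightarrow> TCond (to_prop phi) (to_prop psi)
      | FAnd a b \<Rightarrow> TAnd (trans_star a) (trans_star b)
      | FOr a b \<Rightarrow> TOr (trans_star a) (trans_star b)
      | FImp a b \<Rightarrow> TImp (trans_star a) (trans_star b)
      | FIff a b \<Rightarrow> TIff (trans_star a) (trans_star b)
      | FNeg a \<Rightarrow> TNeg (trans_star a)
      | _ \<Rightarrow> TProp (to_prop f)))"

end

theory Submission
  imports Defs
begin

declare trans_star.simps[simp del]

lemma ts_mf: "modal_free f \<Longrightarrow> trans_star f = TProp (to_prop f)"
  by (subst trans_star.simps) simp
lemma ts_and: "\<not> modal_free (FAnd a b) \<Longrightarrow> trans_star (FAnd a b) = TAnd (trans_star a) (trans_star b)"
  by (subst trans_star.simps) simp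
lemma ts_or: "\<not> modal_free (FOr a b) \<Longrightarrow> trans_star (FOr a b) = TOr (trans_star a) (trans_star b)"
  by (subst trans_star.simps) simp
lemma ts_imp: "\<not> modal_free (FImp a b) \<Longrightarrow> trans_star (FImp a b) = TImp (trans_star a) (trans_star b)"
  by (subst trans_star.simps) simp
lemma ts_iff: "\<not> modal_free (FIff a b) \<Longrightarrow> trans_star (FIff a b) = TIff (trans_star a) (trans_star b)"
  by (subst trans_star.simps) simp
lemma ts_neg: "\<not> modal_free (FNeg a) \<Longrightarrow> trans_star (FNeg a) = TNeg (trans_star a)"
  by (subst trans_star.simps) simp
lemma ts_box: "trans_star (FBox a) = TCond (PNeg (to_prop a)) PBot"
  by (subst trans_star.simps) simp
lemma ts_dia: "trans_star (FDia a) = TNeg (TCond (to_prop a) PBot)"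
  by (subst trans_star.simps) simp
lemma ts_ob: "trans_star (FOb psi phi) = TCond (to_prop phi) (to_prop psi)"
  by (subst trans_star.simps) simp

lemma most_sub: "most P X \<subseteq> X"
  unfolding most_def by auto

lemma mf: "modal_free f \<Longrightarrow> t \<in> X \<Longrightarrow> (\<forall>p. t \<in> V' p \<longleftrightarrow> t \<in> V p) \<Longrightarrow>
  psat V t (to_prop f) = fsat X P V' t f"
  by (induction f) auto


lemma prop_equiv: "(\<forall>t\<in>X. \<forall>p. t \<in> V' p \<longleftrightarrow> t \<in> V p) \<Longrightarrow>
  \<exists>q. \<forall>t\<in>X. fsat X P V' t phi = psat V t q"
proof (induction phi)
  case (FVar x) then show ?case by (intro exI[of _ "PVar x"]) auto
next
  case FBot then show ?case by (intro exI[of _ PBot]) auto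
next
  case (FAnd a b) then obtain qa qb where "\<forall>t\<in>X. fsat X P V' t a = psat V t qa" "\<forall>t\<in>X. fsat X P V' t b = psat V t qb" by blast
  then show ?case by (intro exI[of _ "PAnd qa qb"]) auto
next
  case (FOr a b) then obtain qa qb where "\<forall>t\<in>X. fsat X P V' t a = psat V t qa" "\<forall>t\<in>X. fsat X P V' t b = psat V t qb" by blast
  then show ?case by (intro exI[of _ "POr qa qb"]) auto
next
  case (FImp a b) then obtain qa qb where "\<forall>t\<in>X. fsat X P V' t a = psat V t qa" "\<forall>t\<in>X. fsat X P V' t b = psat V t qb" by blast
  then show ?case by (intro exI[of _ "PImp qa qb"]) auto
next
  case (FIff a b) then obtain qa qb where "\<forall>t\<in>X. fsat X P V' t a = psat V t qa" "\<forall>t\<in>X. fsat X P V' t b = psat V t qb" by blast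
  then show ?case by (intro exI[of _ "PIff qa qb"]) auto
next
  case (FNeg a) then obtain qa where "\<forall>t\<in>X. fsat X P V' t a = psat V t qa" by blast
  then show ?case by (intro exI[of _ "PNeg qa"]) auto
next
  case (FBox a)
  show ?case
  proof (cases "fsat X P V' undefined (FBox a)")
    case True then show ?thesis by (intro exI[of _ "PNeg PBot"]) auto
  next
    case False then show ?thesis by (intro exI[of _ "PBot"]) auto
  qed
next
  case (FDia a)
  show ?case
  proof (cases "fsat X P V' undefined (FDia a)")
    case True then show ?thesis by (intro exI[of _ "PNeg PBot"]) auto
  next
    case False then show ?thesis by (intro exI[of _ "PBot"]) auto
  qed
next
  case (FOb a b)
  show ?case
  proof (cases "fsat X P V' undefined (FOb a b)")
    case True then show ?thesis by (intro exI[of _ "PNeg PBot"]) (simp only: fsat.simps psat.simps, simp)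
  next
    case False then show ?thesis by (intro exI[of _ "PBot"]) (simp only: fsat.simps psat.simps, simp)
  qed
qed

lemma key:
  assumes iI: "i \<in> I" and sC: "s \<in> C i" and uniq: "\<forall>j\<in>I. s \<in> C j \<longrightarrow> j = i"
    and agree: "\<forall>t\<in>C i. \<forall>p. t \<in> V' p \<longleftrightarrow> t \<in> V p"
    and lim: "\<forall>phi. {v \<in> C i. psat V v phi} \<noteq> {} \<longrightarrow> most (Pr i) {v \<in> C i. psat V v phi} \<noteq> {}"
  shows "flat f \<Longrightarrow> tsat I C Pr R V s (trans_star f) = fsat (C i) (Pr i) V' s f"
proof -
  have mfi: "modal_free g \<Longrightarrow> psat V s (to_prop g) = fsat (C i) (Pr i) V' s g" for g
    by (rule mf) (use sC agree in auto)
  have mfall: "modal_free g \<Longrightarrow> t \<in> C i \<Longrightarrow> psat V t (to_prop g) = fsat (C i) (Pr i) V' t g" for g t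
    by (rule mf) (use agree in auto)
  have ex_i: "(\<exists>j\<in>I. s \<in> C j \<and> Q j) \<longleftrightarrow> Q i" for Q
    using iI sC uniq by blast
  show "flat f \<Longrightarrow> tsat I C Pr R V s (trans_star f) = fsat (C i) (Pr i) V' s f"
proof (induction f)
  case (FAnd a b)
  show ?case
  proof (cases "modal_free (FAnd a b)")
    case True then show ?thesis by (simp only: ts_mf tsat.simps mfi)
  next
    case False then show ?thesis using FAnd by (simp add: ts_and)
  qed
next
  case (FOr a b)
  show ?case
  proof (cases "modal_free (FOr a b)")
    case True then show ?thesis by (simp only: ts_mf tsat.simps mfi)
  next
    case False then show ?thesis using FOr by (simp add: ts_or)
  qed
next
  case (FImp a b)
  show ?case
  proof (cases "modal_free (FImp a b)")
    case True then show ?thesis by (simp only: ts_mf tsat.simps mfi)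
  next
    case False then show ?thesis using FImp by (simp add: ts_imp)
  qed
next
  case (FIff a b)
  show ?case
  proof (cases "modal_free (FIff a b)")
    case True then show ?thesis by (simp only: ts_mf tsat.simps mfi)
  next
    case False then show ?thesis using FIff by (simp add: ts_iff)
  qed
next
  case (FNeg a)
  show ?case
  proof (cases "modal_free (FNeg a)")
    case True then show ?thesis by (simp only: ts_mf tsat.simps mfi)
  next
    case False then show ?thesis using FNeg by (simp add: ts_neg)
  qed
next
  case (FVar x) then show ?case using agree sC by (simp add: ts_mf)
next
  case FBot then show ?case by (simp add: ts_mf)
next
  case (FBox a)
  hence m: "modal_free a" by simp
  let ?X = "{v \<in> C i. psat V v (PNeg (to_prop a))}"
  have e: "?X = {t \<in> C i. \<not> fsat (C i) (Pr i) V' t a}"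
    using mfall[OF m] by auto
  have "tsat I C Pr R V s (trans_star (FBox a)) \<longleftrightarrow> most (Pr i) ?X \<subseteq> {v \<in> C i. psat V v PBot}"
    by (simp only: ts_box tsat.simps ex_i)
  also have "\<dots> \<longleftrightarrow> most (Pr i) ?X = {}" by simp
  also have "\<dots> \<longleftrightarrow> ?X = {}"
    using lim[rule_format, of "PNeg (to_prop a)"] most_sub[of "Pr i" ?X] by blast
  also have "\<dots> \<longleftrightarrow> fsat (C i) (Pr i) V' s (FBox a)" unfolding e by auto
  finally show ?case .
next
  case (FDia a)
  hence m: "modal_free a" by simp
  let ?X = "{v \<in> C i. psat V v (to_prop a)}"
  have e: "?X = {t \<in> C i. fsat (C i) (Pr i) V' t a}"
    using mfall[OF m] by auto
  have "tsat I C Pr R V s (trans_star (FDia a)) \<longleftrightarrow> \<not> (most (Pr i) ?X \<subseteq> {v \<in> C i. psat V v PBot})"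
    by (simp only: ts_dia tsat.simps ex_i)
  also have "\<dots> \<longleftrightarrow> most (Pr i) ?X \<noteq> {}" by simp
  also have "\<dots> \<longleftrightarrow> ?X \<noteq> {}"
    using lim[rule_format, of "to_prop a"] most_sub[of "Pr i" ?X] by blast
  also have "\<dots> \<longleftrightarrow> fsat (C i) (Pr i) V' s (FDia a)" unfolding e by auto
  finally show ?case .
next
  case (FOb b a)
  hence m: "modal_free a" "modal_free b" by simp_all
  have e1: "{v \<in> C i. psat V v (to_prop a)} = {t \<in> C i. fsat (C i) (Pr i) V' t a}"
    using mfall[OF m(1)] by auto
  have e2: "{v \<in> C i. psat V v (to_prop b)} = {t \<in> C i. fsat (C i) (Pr i) V' t b}"
    using mfall[OF m(2)] by auto
  have "tsat I C Pr R V s (trans_star (FOb b a)) \<longleftrightarrow> most (Pr i) {v \<in> C i. psat V v (to_prop a)} \<subseteq> {v \<in> C i. psat V v (to_prop b)}"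
    by (simp only: ts_ob tsat.simps ex_i)
  also have "\<dots> \<longleftrightarrow> fsat (C i) (Pr i) V' s (FOb b a)" unfolding e1 e2 fsat.simps by (rule refl)
  finally show ?case .
qed
qed

primrec of_prop :: "pform \<Rightarrow> fform" where
  "of_prop (PVar p) = FVar p"
| "of_prop PBot = FBot"
| "of_prop (PAnd a b) = FAnd (of_prop a) (of_prop b)"
| "of_prop (POr a b) = FOr (of_prop a) (of_prop b)"
| "of_prop (PImp a b) = FImp (of_prop a) (of_prop b)"
| "of_prop (PIff a b) = FIff (of_prop a) (of_prop b)"
| "of_prop (PNeg a) = FNeg (of_prop a)"

lemma of_prop_sat: "fsat S P V t (of_prop q) = psat V t q"
  by (induction q) auto

lemma tm_intro: "R \<subseteq> S \<times> S \<Longrightarrow> (\<forall>s\<in>S. \<exists>v. (s, v) \<in> R) \<Longrightarrow> trans R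
   \<Longrightarrow> (\<forall>i\<in>I. C i \<noteq> {}) \<Longrightarrow> (\<forall>i\<in>I. \<forall>j\<in>I. i \<noteq> j \<longrightarrow> C i \<inter> C j = {})
   \<Longrightarrow> (\<Union>i\<in>I. C i) = S
   \<Longrightarrow> (\<forall>i\<in>I. Pr i \<subseteq> C i \<times> C i)
   \<Longrightarrow> (\<forall>p. V p \<subseteq> S)
   \<Longrightarrow> (\<forall>i\<in>I. \<forall>phi. {v \<in> C i. psat V v phi} \<noteq> {} \<longrightarrow>
                     most (Pr i) {v \<in> C i. psat V v phi} \<noteq> {}) \<Longrightarrow> trust_model S I C Pr R V"
  unfolding trust_model_def by blast

lemma fcons_D: "fcons TYPE('s) \<Gamma> \<alpha> \<Longrightarrow> pref_model (S :: 's set) P V \<Longrightarrow> limitedness S P V \<Longrightarrow>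
   s \<in> S \<Longrightarrow> (\<forall>\<gamma>\<in>\<Gamma>. fsat S P V s \<gamma>) \<Longrightarrow> fsat S P V s \<alpha>"
  unfolding fcons_def by blast

lemma tcons_D: "tcons TYPE('s) TYPE('i) \<Gamma> \<alpha> \<Longrightarrow> trust_model (S :: 's set) (I :: 'i set) C Pr R V \<Longrightarrow>
   s \<in> S \<Longrightarrow> (\<forall>\<gamma>\<in>\<Gamma>. tsat I C Pr R V s \<gamma>) \<Longrightarrow> tsat I C Pr R V s \<alpha>"
  unfolding tcons_def by blast

theorem theorem3:
  fixes \<Gamma> :: "fform set" and \<alpha> :: fform
  assumes "\<forall>\<gamma>\<in>\<Gamma>. flat \<gamma>" and "flat \<alpha>"
  shows "fcons TYPE('s) \<Gamma> \<alpha> \<longleftrightarrow> tcons TYPE('s) TYPE('i) (trans_star ` \<Gamma>) (trans_star \<alpha>)"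
proof
  assume F: "fcons TYPE('s) \<Gamma> \<alpha>"
  show "tcons TYPE('s) TYPE('i) (trans_star ` \<Gamma>) (trans_star \<alpha>)"
    unfolding tcons_def
  proof (intro allI impI ballI)
    fix S :: "'s set" and I :: "'i set" and C Pr R V s
    assume tm: "trust_model S I C Pr R V" and sS: "s \<in> S"
      and G: "\<forall>\<gamma>\<in>trans_star ` \<Gamma>. tsat I C Pr R V s \<gamma>"
    from tm sS obtain i where iI: "i \<in> I" and sC: "s \<in> C i"
      unfolding trust_model_def by blast
    have uniq: "\<forall>j\<in>I. s \<in> C j \<longrightarrow> j = i" using tm iI sC unfolding trust_model_def by blast
    define V' where "V' = (\<lambda>p. V p \<inter> C i)"
    have agree: "\<forall>t\<in>C i. \<forall>p. t \<in> V' p \<longleftrightarrow> t \<in> V p" unfolding V'_def by auto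
    have lim: "\<forall>phi. {v \<in> C i. psat V v phi} \<noteq> {} \<longrightarrow> most (Pr i) {v \<in> C i. psat V v phi} \<noteq> {}"
      using tm iI unfolding trust_model_def by blast
    have pm: "pref_model (C i) (Pr i) V'"
      using tm iI unfolding trust_model_def pref_model_def V'_def by blast
    have lm: "limitedness (C i) (Pr i) V'"
      unfolding limitedness_def
    proof (intro allI impI)
      fix phi
      obtain q where q: "\<forall>t\<in>C i. fsat (C i) (Pr i) V' t phi = psat V t q"
        using prop_equiv[OF agree] by blast
      hence "{t \<in> C i. fsat (C i) (Pr i) V' t phi} = {v \<in> C i. psat V v q}" by auto
      then show "{t \<in> C i. fsat (C i) (Pr i) V' t phi} \<noteq> {} \<Longrightarrow> most (Pr i) {t \<in> C i. fsat (C i) (Pr i) V' t phi} \<noteq> {}"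
        using lim by simp
    qed
    note K = key[where R=R and i=i and I=I and s=s and C=C and V'=V' and V=V and Pr=Pr, OF iI sC uniq agree lim]
    have "\<forall>\<gamma>\<in>\<Gamma>. fsat (C i) (Pr i) V' s \<gamma>"
    proof
      fix g assume "g \<in> \<Gamma>"
      then show "fsat (C i) (Pr i) V' s g" using G K[of g] assms(1) by simp
    qed
    hence "fsat (C i) (Pr i) V' s \<alpha>" by (rule fcons_D[OF F pm lm sC])
    then show "tsat I C Pr R V s (trans_star \<alpha>)" using K[of \<alpha>] assms(2) by simp
  qed
next
  assume T: "tcons TYPE('s) TYPE('i) (trans_star ` \<Gamma>) (trans_star \<alpha>)"
  show "fcons TYPE('s) \<Gamma> \<alpha>"
    unfolding fcons_def
  proof (intro allI impI ballI)
    fix S :: "'s set" and P V s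
    assume pl: "pref_model S P V \<and> limitedness S P V" and sS: "s \<in> S"
      and G: "\<forall>\<gamma>\<in>\<Gamma>. fsat S P V s \<gamma>"
    obtain i0 :: 'i where True by simp
    define I where "I = {i0}"
    define C :: "'i \<Rightarrow> 's set" where "C = (\<lambda>_. S)"
    define Pr :: "'i \<Rightarrow> 's rel" where "Pr = (\<lambda>_. P)"
    define R where "R = S \<times> S"
    have lim: "\<forall>phi. {v \<in> C i0. psat V v phi} \<noteq> {} \<longrightarrow> most (Pr i0) {v \<in> C i0. psat V v phi} \<noteq> {}"
    proof (intro allI impI)
      fix phi
      assume ne: "{v \<in> C i0. psat V v phi} \<noteq> {}"
      have eq: "{v \<in> C i0. psat V v phi} = {t \<in> S. fsat S P V t (of_prop phi)}"
        unfolding C_def by (simp add: of_prop_sat)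
      have "\<forall>phi. {t \<in> S. fsat S P V t phi} \<noteq> {} \<longrightarrow> most P {t \<in> S. fsat S P V t phi} \<noteq> {}"
        using pl unfolding limitedness_def by blast
      hence "most P {t \<in> S. fsat S P V t (of_prop phi)} \<noteq> {}" using ne eq by simp
      then show "most (Pr i0) {v \<in> C i0. psat V v phi} \<noteq> {}" using eq unfolding Pr_def by simp
    qed
    have tm: "trust_model S I C Pr R V"
    proof (rule tm_intro)
      show "R \<subseteq> S \<times> S" unfolding R_def by simp
      show "\<forall>s\<in>S. \<exists>v. (s, v) \<in> R" unfolding R_def by blast
      show "trans R" unfolding R_def trans_def by blast
      show "\<forall>i\<in>I. C i \<noteq> {}" using sS unfolding I_def C_def by blast
      show "\<forall>i\<in>I. \<forall>j\<in>I. i \<noteq> j \<longrightarrow> C i \<inter> C j = {}" unfolding I_def by blast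
      show "(\<Union>i\<in>I. C i) = S" unfolding I_def C_def by simp
      show "\<forall>i\<in>I. Pr i \<subseteq> C i \<times> C i" using pl unfolding I_def C_def Pr_def pref_model_def by blast
      show "\<forall>p. V p \<subseteq> S" using pl unfolding pref_model_def by blast
      show "\<forall>i\<in>I. \<forall>phi. {v \<in> C i. psat V v phi} \<noteq> {} \<longrightarrow>
                     most (Pr i) {v \<in> C i. psat V v phi} \<noteq> {}" using lim unfolding I_def by blast
    qed
    have iI: "i0 \<in> I" unfolding I_def by simp
    have sC: "s \<in> C i0" unfolding C_def using sS .
    have uniq: "\<forall>j\<in>I. s \<in> C j \<longrightarrow> j = i0" unfolding I_def by simp
    have agree: "\<forall>t\<in>C i0. \<forall>p. t \<in> V p \<longleftrightarrow> t \<in> V p" by simp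
    note K0 = key[where R=R and i=i0 and I=I and s=s and C=C and V'=V and V=V and Pr=Pr, OF iI sC uniq agree lim]
    have K: "flat f \<Longrightarrow> tsat I C Pr R V s (trans_star f) = fsat S P V s f" for f
      using K0[of f] unfolding C_def Pr_def .
    have "\<forall>\<gamma>\<in>trans_star ` \<Gamma>. tsat I C Pr R V s \<gamma>"
    proof
      fix g assume "g \<in> trans_star ` \<Gamma>"
      then obtain h where "h \<in> \<Gamma>" "g = trans_star h" by blast
      then show "tsat I C Pr R V s g" using G K[of h] assms(1) by simp
    qed
    hence "tsat I C Pr R V s (trans_star \<alpha>)" by (rule tcons_D[OF T tm sS])
    then show "fsat S P V s \<alpha>" using K[of \<alpha>] assms(2) by simp
  qed
qed

end
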